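(* Let $f(z)=e^z$ and let $U\subset\mathbb{C}$ be open and nonempty. Then $U$ contains a repelling periodic point of $f$.
   Context: A point $p$ is periodic if $f^n(p)=p$ for some $n\geq1$ ($f^n$ the $n$-th iterate); it is repelling if moreover $|(f^n)'(p)|>1$. *)

theory Defs
  imports "HOL-Analysis.Analysis"
begin

definition repelling_periodic_point :: "(complex \<Rightarrow> complex) \<Rightarrow> complex \<Rightarrow> bool" where
  "repelling_periodic_point f p \<longleftrightarrow>
     (\<exists>n::nat. n \<ge> 1 \<and> (f ^^ n) p = p \<and> cmod (deriv (f ^^ n) p) > 1)"

end

theory Submission
  imports Defs "HOL-Complex_Analysis.Complex_Analysis"
begin

lemma deriv_iter_exp:
  "((exp ^^ n) has_field_derivative (\<Prod>i<n. exp ((exp ^^ i) z))) (at z)"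
proof (induction n)
  case 0
  then show ?case by (simp add: id_def)
next
  case (Suc n)
  have "((\<lambda>x. exp ((exp ^^ n) x)) has_field_derivative exp ((exp ^^ n) z) * (\<Prod>i<n. exp ((exp ^^ i) z))) (at z)"
    by (rule DERIV_chain2[OF DERIV_exp Suc])
  then show ?case by (simp add: mult.commute)
qed

lemma holo_iter_exp: "(exp ^^ n) holomorphic_on S"
  using deriv_iter_exp by (meson field_differentiable_def field_differentiable_at_within holomorphic_on_def)

lemma SchwarzPick:
  fixes f :: "complex \<Rightarrow> complex"
  assumes holf: "f holomorphic_on ball c r" and r: "r > 0" and pos: "\<And>z. z \<in> ball c r \<Longrightarrow> Im (f z) > 0"
  shows "norm (deriv f c) \<le> 2 * Im (f c) / r"
proof -
  define w0 where "w0 = f c"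
  have w0: "Im w0 > 0" using pos r by (simp add: w0_def)
  define h where "h \<zeta> = (f (c + of_real r * \<zeta>) - w0) / (f (c + of_real r * \<zeta>) - cnj w0)" for \<zeta>
  have inball: "c + of_real r * \<zeta> \<in> ball c r" if "norm \<zeta> < 1" for \<zeta>
    using that r by (simp add: dist_norm norm_mult)
  have den: "f (c + of_real r * \<zeta>) - cnj w0 \<noteq> 0" if "norm \<zeta> < 1" for \<zeta>
  proof
    assume "f (c + of_real r * \<zeta>) - cnj w0 = 0"
    then have "f (c + of_real r * \<zeta>) = cnj w0" by simp
    then have "Im (f (c + of_real r * \<zeta>)) = - Im w0" by simp
    with pos[OF inball[OF that]] w0 show False by simp
  qed
  have holaff: "(\<lambda>\<zeta>. f (c + of_real r * \<zeta>)) holomorphic_on ball 0 1"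
    by (rule holomorphic_on_compose_gen[OF _ holf, unfolded o_def]) (use inball in \<open>auto intro!: holomorphic_intros simp: mem_ball\<close>)
  have holh: "h holomorphic_on ball 0 1"
    unfolding h_def using den by (auto intro!: holomorphic_intros holaff)
  have h0: "h 0 = 0" by (simp add: h_def w0_def)
  have lt: "norm (h \<zeta>) < 1" if "norm \<zeta> < 1" for \<zeta>
  proof -
    define w where "w = f (c + of_real r * \<zeta>)"
    have iw: "Im w > 0" using pos[OF inball[OF that]] by (simp add: w_def)
    have "(cmod (w - w0))^2 < (cmod (w - cnj w0))^2"
      using iw w0 unfolding cmod_power2 by (simp add: power2_eq_square algebra_simps)
    then have "cmod (w - w0) < cmod (w - cnj w0)"
      by (meson norm_ge_zero power_less_imp_less_base)
    moreover have "cmod (w - cnj w0) > 0" using den[OF that] by (simp add: w_def)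
    ultimately show ?thesis by (simp add: h_def w_def[symmetric] norm_divide)
  qed
  have S: "norm (deriv h 0) \<le> 1"
    using Schwarz_Lemma(2)[OF holh h0 lt, of 0] by simp
  have df: "(f has_field_derivative deriv f c) (at c)"
    using holf r by (meson centre_in_ball holomorphic_derivI open_ball)
  have daff: "((\<lambda>\<zeta>. f (c + of_real r * \<zeta>)) has_field_derivative deriv f c * of_real r) (at 0)"
  proof -
    have "((\<lambda>\<zeta>. c + of_real r * \<zeta>) has_field_derivative of_real r) (at 0)"
      by (auto intro!: derivative_eq_intros)
    from DERIV_chain2[of f, OF _ this] df show ?thesis by simp
  qed
  have den0: "w0 - cnj w0 \<noteq> 0" using den[of 0] by (simp add: w0_def)
  have d1: "((\<lambda>\<zeta>. f (c + of_real r * \<zeta>) - w0) has_field_derivative deriv f c * of_real r - 0) (at 0)"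
    by (rule DERIV_diff[OF daff DERIV_const])
  have d2: "((\<lambda>\<zeta>. f (c + of_real r * \<zeta>) - cnj w0) has_field_derivative deriv f c * of_real r - 0) (at 0)"
    by (rule DERIV_diff[OF daff DERIV_const])
  have "(h has_field_derivative deriv f c * of_real r / (w0 - cnj w0)) (at 0)"
    unfolding h_def
    apply (rule DERIV_cong[OF DERIV_divide[OF d1 d2]])
    using den0 by (simp_all add: w0_def[symmetric])
  then have "deriv h 0 = deriv f c * of_real r / (w0 - cnj w0)"
    by (rule DERIV_imp_deriv)
  moreover have "cmod (w0 - cnj w0) = 2 * Im w0"
    using w0 by (simp add: complex_diff_cnj norm_mult)
  ultimately have "norm (deriv f c) * r / (2 * Im w0) \<le> 1"
    using S r by (simp add: norm_divide norm_mult)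
  then show ?thesis using w0 r by (simp add: w0_def field_simps)
qed


lemma sin5: "\<bar>sin (x::real) - (x - x^3/6)\<bar> \<le> \<bar>x\<bar>^5/120"
proof -
  have s: "{..<5::nat} = {0,1,2,3,4}" by auto
  have e: "(\<Sum>m<5. sin_coeff m * x ^ m) = x - x^3/6" unfolding s by (simp add: sin_coeff_def fact_numeral)
  have f5: "fact 5 = (120::real)" by (simp add: eval_nat_numeral)
  have f: "inverse (fact 5) * \<bar>x\<bar> ^ 5 = \<bar>x\<bar>^5/(120::real)" unfolding f5 by simp
  show ?thesis using Maclaurin_sin_bound[of x 5] unfolding e f .
qed

lemma sin3: "\<bar>sin (x::real) - x\<bar> \<le> \<bar>x\<bar>^3/6"
proof -
  have s: "{..<3::nat} = {0,1,2}" by auto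
  have e: "(\<Sum>m<3. sin_coeff m * x ^ m) = x" unfolding s by (simp add: sin_coeff_def)
  have f5: "fact 3 = (6::real)" by (simp add: eval_nat_numeral)
  have f: "inverse (fact 3) * \<bar>x\<bar> ^ 3 = \<bar>x\<bar>^3/(6::real)" unfolding f5 by simp
  show ?thesis using Maclaurin_sin_bound[of x 3] unfolding e f .
qed

lemma sin_big: assumes "\<bar>y\<bar> \<ge> 1" shows "\<bar>sin (y::real)\<bar> \<le> 13/15 * \<bar>y\<bar>"
proof (cases "\<bar>y\<bar> \<ge> 2")
  case True
  then show ?thesis using abs_sin_le_one[of y] by linarith
next
  case False
  define a where "a = \<bar>y\<bar>"
  have a: "1 \<le> a" "a \<le> 2" using assms False by (auto simp: a_def)
  have a2': "a^2 \<le> 2^2" by (rule power_mono) (use a in auto)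
  then have a2: "a^2 \<le> 4" by simp
  have a21: "a^2 \<ge> 1" using a by simp
  have "\<bar>y - y^3/6\<bar> = a * (1 - a^2/6)"
  proof -
    have e1: "y - y^3/6 = y * (1 - y^2/6)" by (simp add: power2_eq_square power3_eq_cube algebra_simps)
    have e2: "y^2 = a^2" unfolding a_def by (rule power2_abs[symmetric])
    have nn: "1 - a^2/6 \<ge> 0" using a2 by linarith
    have "\<bar>y - y^3/6\<bar> = \<bar>y\<bar> * \<bar>1 - a^2/6\<bar>" unfolding e1 e2 by (rule abs_mult)
    also have "\<dots> = a * (1 - a^2/6)" using nn unfolding a_def by (metis abs_of_nonneg)
    finally show ?thesis .
  qed
  moreover have "\<bar>y\<bar>^5 = a^5" unfolding a_def ..
  ultimately have "\<bar>sin y\<bar> \<le> a * (1 - a^2/6) + a^5/120"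
    using sin5[of y] by linarith
  also have "\<dots> = a * (1 - a^2/6 + (a^2*a^2)/120)"
  proof -
    have "a^5 = a * (a^2*a^2)" by (simp add: power2_eq_square numeral_eq_Suc)
    then show ?thesis by (simp add: distrib_left)
  qed
  also have "\<dots> \<le> a * (13/15)"
  proof (rule mult_left_mono)
    have "a^2 * a^2 \<le> 4 * a^2" using a2 by (rule mult_right_mono) simp
    then show "1 - a^2/6 + (a^2*a^2)/120 \<le> 13/15" using a21 by linarith
  qed (use a in simp)
  finally show ?thesis by (simp add: a_def)
qed

lemma sin_small: assumes "\<bar>y::real\<bar> < 1" shows "\<bar>sin y\<bar> \<ge> \<bar>y\<bar>/2"
proof -
  have "\<bar>y\<bar>^3 \<le> \<bar>y\<bar>^1" using assms by (intro power_decreasing[of 1 3]) auto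
  then have "\<bar>y\<bar>^3 \<le> \<bar>y\<bar>" by simp
  moreover have "\<bar>y\<bar> \<le> \<bar>sin y\<bar> + \<bar>sin y - y\<bar>" by (smt (verit))
  ultimately show ?thesis using sin3[of y] by linarith
qed

lemma cos_small: assumes "\<bar>y::real\<bar> < 1" shows "cos y \<ge> 1/2"
proof -
  have "cos y = 1 - 2 * (sin (y/2))^2" using cos_double_sin[of "y/2"] by simp
  moreover have "\<bar>sin (y/2)\<bar> \<le> 1/2" using abs_sin_x_le_abs_x[of "y/2"] assms by simp
  then have "(sin (y/2))^2 \<le> (1/2)^2"
    by (metis abs_ge_zero power2_abs power_mono)
  ultimately show ?thesis by (simp add: power2_eq_square)
qed


lemma hits_real:
  assumes r: "r > 0"
  shows "\<exists>z\<in>ball c0 r. \<exists>m. Im ((exp ^^ m) z) = 0"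
proof (rule ccontr)
  assume "\<not> ?thesis"
  then have nz: "\<And>w m. w \<in> ball c0 r \<Longrightarrow> Im ((exp ^^ m) w) \<noteq> 0" by auto
  define z where "z n = (exp ^^ n) c0" for n
  define x where "x n = Re (z n)" for n
  define y where "y n = Im (z n)" for n
  have c0: "c0 \<in> ball c0 r" using r by simp
  have ynz: "y n \<noteq> 0" for n using nz[OF c0] by (simp add: y_def z_def)
  have zs: "z (Suc n) = exp (z n)" for n by (simp add: z_def)
  have ys: "y (Suc n) = exp (x n) * sin (y n)" for n by (simp add: y_def x_def zs Im_exp)
  have xs: "x (Suc n) = exp (x n) * cos (y n)" for n by (simp add: y_def x_def zs Re_exp)
  have bound: "(\<Prod>i<n. exp (x i)) \<le> 2 * \<bar>y n\<bar> / r" for n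
  proof -
    let ?F = "exp ^^ n"
    have sgn: "Im (?F w) * y n > 0" if w: "w \<in> ball c0 r" for w
    proof (rule ccontr)
      assume "\<not> ?thesis"
      moreover have "Im (?F w) * y n \<noteq> 0" using nz[OF w] ynz by simp
      ultimately have neg: "Im (?F w) * y n < 0" by linarith
      have conn: "connected (?F ` ball c0 r)"
        by (intro connected_continuous_image holomorphic_on_imp_continuous_on holo_iter_exp) simp
      have m1: "?F w \<in> ?F ` ball c0 r" "?F c0 \<in> ?F ` ball c0 r" using w c0 by auto
      have "\<exists>u\<in>?F ` ball c0 r. inner \<i> u = 0"
      proof (cases "Im (?F w) < 0")
        case True
        then have "y n > 0" using neg by (simp add: mult_less_0_iff)
        then show ?thesis using connected_ivt_hyperplane[OF conn m1(1) m1(2), of \<i> 0] True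
          by (simp add: y_def z_def)
      next
        case False
        then have "Im (?F w) > 0" using nz[OF w, of n] by linarith
        then have "y n < 0" using neg by (simp add: mult_less_0_iff)
        then show ?thesis using connected_ivt_hyperplane[OF conn m1(2) m1(1), of \<i> 0] \<open>Im (?F w) > 0\<close>
          by (simp add: y_def z_def)
      qed
      then show False using nz by auto
    qed
    define \<sigma> where "\<sigma> = (if y n > 0 then 1 else -1 :: complex)"
    define f where "f w = \<sigma> * ?F w" for w
    have holf: "f holomorphic_on ball c0 r" unfolding f_def by (intro holomorphic_intros holo_iter_exp)
    have posf: "Im (f w) > 0" if "w \<in> ball c0 r" for w
      using sgn[OF that] by (auto simp: f_def \<sigma>_def zero_less_mult_iff)
    have "norm (deriv f c0) \<le> 2 * Im (f c0) / r" by (rule SchwarzPick[OF holf r posf])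
    moreover have "Im (f c0) = \<bar>y n\<bar>" by (simp add: f_def \<sigma>_def y_def z_def)
    moreover have "deriv f c0 = \<sigma> * (\<Prod>i<n. exp ((exp ^^ i) c0))"
    proof -
      have "(f has_field_derivative \<sigma> * (\<Prod>i<n. exp ((exp ^^ i) c0))) (at c0)"
        unfolding f_def by (rule DERIV_cmult[OF deriv_iter_exp])
      then show ?thesis by (rule DERIV_imp_deriv)
    qed
    moreover have "norm \<sigma> = 1" by (simp add: \<sigma>_def)
    moreover have "norm (\<Prod>i<n. exp ((exp ^^ i) c0)) = (\<Prod>i<n. exp (x i))"
      by (simp add: prod_norm[symmetric] norm_exp_eq_Re x_def z_def)
    ultimately show ?thesis by (simp add: norm_mult)
  qed
  define \<theta> where "\<theta> i = (if \<bar>y i\<bar> \<ge> 1 then 13/15 else 1::real)" for i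
  have th_pos: "\<theta> i > 0" for i by (simp add: \<theta>_def)
  have th_le: "\<theta> i \<le> 1" for i by (simp add: \<theta>_def)
  have stepy: "\<bar>y (Suc i)\<bar> \<le> exp (x i) * \<theta> i * \<bar>y i\<bar>" for i
  proof -
    have "\<bar>sin (y i)\<bar> \<le> \<theta> i * \<bar>y i\<bar>"
      using sin_big[of "y i"] abs_sin_x_le_abs_x[of "y i"] by (simp add: \<theta>_def)
    then have "exp (x i) * \<bar>sin (y i)\<bar> \<le> exp (x i) * (\<theta> i * \<bar>y i\<bar>)"
      by (intro mult_left_mono) auto
    then show ?thesis by (simp add: ys abs_mult mult.assoc)
  qed
  have tele: "\<bar>y n\<bar> \<le> (\<Prod>i<n. exp (x i)) * (\<Prod>i<n. \<theta> i) * \<bar>y 0\<bar>" for n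
  proof (induction n)
    case 0 then show ?case by simp
  next
    case (Suc n)
    have "\<bar>y (Suc n)\<bar> \<le> exp (x n) * \<theta> n * \<bar>y n\<bar>" by (rule stepy)
    also have "\<dots> \<le> exp (x n) * \<theta> n * ((\<Prod>i<n. exp (x i)) * (\<Prod>i<n. \<theta> i) * \<bar>y 0\<bar>)"
      by (intro mult_left_mono Suc.IH) (use th_pos in \<open>auto intro: less_imp_le\<close>)
    finally show ?case by (simp add: algebra_simps)
  qed
  define B where "B = 2 * \<bar>y 0\<bar> / r"
  have Bpos: "B > 0" using ynz[of 0] r by (simp add: B_def)
  have prodth: "1 \<le> B * (\<Prod>i<n. \<theta> i)" for n
  proof -
    have yn: "\<bar>y n\<bar> > 0" using ynz by simp
    have p0: "(\<Prod>i<n. \<theta> i) \<ge> 0" using th_pos by (simp add: prod_nonneg less_imp_le)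
    have "\<bar>y n\<bar> \<le> (2 * \<bar>y n\<bar> / r) * (\<Prod>i<n. \<theta> i) * \<bar>y 0\<bar>"
      using tele[of n] bound[of n] p0
      by (meson abs_ge_zero mult_right_mono order_trans)
    then have "\<bar>y n\<bar> * 1 \<le> \<bar>y n\<bar> * (B * (\<Prod>i<n. \<theta> i))"
      by (simp add: B_def algebra_simps)
    then show ?thesis using yn by (simp add: mult_le_cancel_left_pos)
  qed
  define S where "S = {i. \<bar>y i\<bar> \<ge> 1}"
  have finS: "finite S"
  proof (rule ccontr)
    assume inf: "infinite S"
    obtain K where K: "(13/15::real)^K < 1 / B"
      using real_arch_pow_inv[of "1/B" "13/15"] Bpos by auto
    obtain C where C: "finite C" "card C = K" "C \<subseteq> S"
      using infinite_arbitrarily_large[OF inf] by blast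
    obtain n where n: "C \<subseteq> {..<n}" using finite_nat_bounded[OF C(1)] by blast
    have "(\<Prod>i<n. \<theta> i) = (\<Prod>i\<in>{..<n} - C. \<theta> i) * (\<Prod>i\<in>C. \<theta> i)"
      using prod.subset_diff[OF n] by simp
    also have "(\<Prod>i\<in>C. \<theta> i) = (13/15)^K"
    proof -
      have "(\<Prod>i\<in>C. \<theta> i) = (\<Prod>i\<in>C. 13/15)"
        by (rule prod.cong) (use C(3) in \<open>auto simp: S_def \<theta>_def\<close>)
      then show ?thesis using C(2) by simp
    qed
    also have "(\<Prod>i\<in>{..<n} - C. \<theta> i) \<le> 1"
      by (rule prod_le_1) (use th_pos th_le in \<open>auto intro: less_imp_le\<close>)
    then have "(\<Prod>i\<in>{..<n} - C. \<theta> i) * (13/15)^K \<le> 1 * (13/15)^K"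
      by (intro mult_right_mono) auto
    finally have "(\<Prod>i<n. \<theta> i) < 1 / B" using K by simp
    then have "B * (\<Prod>i<n. \<theta> i) < 1" using Bpos by (simp add: field_simps)
    with prodth[of n] show False by simp
  qed
  obtain N where N: "\<And>i. i \<ge> N \<Longrightarrow> \<bar>y i\<bar> < 1"
  proof -
    obtain N where SN: "S \<subseteq> {..<N}" using finite_nat_bounded[OF finS] by blast
    have "\<bar>y i\<bar> < 1" if "i \<ge> N" for i
    proof (rule ccontr)
      assume "\<not> \<bar>y i\<bar> < 1"
      then have "i \<in> S" by (simp add: S_def)
      with SN have "i < N" by auto
      with that show False by simp
    qed
    then show ?thesis using that by blast
  qed
  have l2: "ln 2 < (1::real)" by (rule ln_2_less_1)
  have xinc: "x (Suc i) \<ge> x i + (1 - ln 2)" if "i \<ge> N" for i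
  proof -
    have "exp (x i - ln 2) \<ge> 1 + (x i - ln 2)" by (rule exp_ge_add_one_self)
    moreover have "exp (x i - ln 2) = exp (x i) / 2" by (simp add: exp_diff)
    moreover have "exp (x i) * cos (y i) \<ge> exp (x i) * (1/2)"
      by (rule mult_left_mono) (use cos_small[OF N[OF that]] in auto)
    moreover have "x (Suc i) = exp (x i) * cos (y i)" by (rule xs)
    ultimately show ?thesis by linarith
  qed
  have xlin: "x (N + k) \<ge> x N + real k * (1 - ln 2)" for k
  proof (induction k)
    case 0 then show ?case by simp
  next
    case (Suc k)
    have "x (Suc (N + k)) \<ge> x (N + k) + (1 - ln 2)" by (rule xinc) simp
    with Suc.IH show ?case by (simp add: algebra_simps)
  qed
  obtain k0 :: nat where k0: "x N + real k0 * (1 - ln 2) \<ge> ln 4"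
  proof -
    obtain k0 :: nat where "real k0 \<ge> (ln 4 - x N) / (1 - ln 2)" using real_arch_simple by blast
    then have h: "real k0 * (1 - ln 2) \<ge> ln 4 - x N" using l2 by (simp add: field_simps)
    show ?thesis by (rule that[of k0]) (use h in linarith)
  qed
  define N' where "N' = N + k0"
  have x4: "exp (x i) \<ge> 4" if "i \<ge> N'" for i
  proof -
    define k where "k = i - N"
    have k: "i = N + k" "k \<ge> k0" using that unfolding N'_def k_def by arith+
    have "real k * (1 - ln 2) \<ge> real k0 * (1 - ln 2)" using k l2 by (intro mult_right_mono) auto
    then have "x (N + k) \<ge> ln 4" using xlin[of k] k0 by linarith
    then have "x i \<ge> ln 4" using k(1) by simp
    then have "exp (ln 4) \<le> exp (x i)" by (subst exp_le_cancel_iff)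
    moreover have "exp (ln 4) = (4::real)" by simp
    ultimately show ?thesis by linarith
  qed
  have ydbl: "\<bar>y (Suc i)\<bar> \<ge> 2 * \<bar>y i\<bar>" if "i \<ge> N'" for i
  proof -
    have "i \<ge> N" using that by (simp add: N'_def)
    have "exp (x i) * \<bar>sin (y i)\<bar> \<ge> 4 * (\<bar>y i\<bar> / 2)"
      using x4[OF that] sin_small[OF N[OF \<open>i \<ge> N\<close>]]
      by (intro mult_mono) auto
    then show ?thesis by (simp add: ys abs_mult)
  qed
  have ygrow: "\<bar>y (N' + j)\<bar> \<ge> 2^j * \<bar>y N'\<bar>" for j
  proof (induction j)
    case 0 then show ?case by simp
  next
    case (Suc j)
    have "\<bar>y (Suc (N' + j))\<bar> \<ge> 2 * \<bar>y (N' + j)\<bar>" by (rule ydbl) simp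
    with Suc.IH show ?case by simp
  qed
  obtain j where j: "1 / \<bar>y N'\<bar> < 2^j" using real_arch_pow[of 2 "1 / \<bar>y N'\<bar>"] by auto
  have "2^j * \<bar>y N'\<bar> > 1" using j ynz[of N'] by (simp add: field_simps)
  moreover have "\<bar>y (N' + j)\<bar> < 1" by (rule N) (simp add: N'_def)
  ultimately show False using ygrow[of j] by linarith
qed

lemma Ln_lip:
  assumes "s \<in> cball 1 (1/2)" "t \<in> cball 1 (1/2)"
  shows "cmod (Ln s - Ln t) \<le> 2 * cmod (s - t)"
proof -
  have re: "Re z > 0" if "z \<in> cball 1 (1/2)" for z :: complex
  proof -
    have "\<bar>Re (1 - z)\<bar> \<le> cmod (1 - z)" by (rule abs_Re_le_cmod)
    then show ?thesis using that by (simp add: dist_norm)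
  qed
  have nz: "cmod z \<ge> 1/2" if "z \<in> cball 1 (1/2)" for z :: complex
  proof -
    have "cmod (1::complex) \<le> cmod z + cmod (1 - z)" by (rule norm_triangle_sub)
    then show ?thesis using that by (simp add: dist_norm)
  qed
  have "cmod (Ln s - Ln t) \<le> 2 * cmod (s - t)"
  proof (rule field_differentiable_bound[where S="cball 1 (1/2)" and f=Ln and f'=inverse and B=2 and x=s and y=t])
    show "convex (cball (1::complex) (1/2))" by simp
    show "(Ln has_field_derivative inverse z) (at z within cball 1 (1/2))" if "z \<in> cball 1 (1/2)" for z
    proof -
      have "z \<notin> \<real>\<^sub>\<le>\<^sub>0" using re[OF that] by (auto simp: nonpos_Reals_def)
      then show ?thesis by (rule has_field_derivative_at_within[OF has_field_derivative_Ln])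
    qed
    show "cmod (inverse z) \<le> 2" if "z \<in> cball 1 (1/2)" for z
    proof -
      have "inverse (cmod z) \<le> inverse (1/2)" by (rule le_imp_inverse_le) (use nz[OF that] in auto)
      then show ?thesis by (simp add: norm_inverse)
    qed
  qed (use assms in auto)
  then show ?thesis .
qed

lemma G_props:
  fixes z u u' :: complex
  defines "w \<equiv> exp z"
  assumes u: "cmod (u - w) \<le> cmod w / 2" and u': "cmod (u' - w) \<le> cmod w / 2"
  shows "u \<noteq> 0" "exp (z + Ln (u / w)) = u" "cmod (Ln (u / w)) \<le> 2 * cmod (u - w) / cmod w"
    "cmod ((z + Ln (u / w)) - (z + Ln (u' / w))) \<le> 2 / cmod w * cmod (u - u')"
    "cmod u \<ge> cmod w / 2"
proof -
  have w: "w \<noteq> 0" "cmod w > 0" by (auto simp: w_def)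
  have "cmod w \<le> cmod u + cmod (w - u)" by (rule norm_triangle_sub)
  then have "cmod w \<le> cmod u + cmod (u - w)" using norm_minus_commute[of w u] by linarith
  then show un: "cmod u \<ge> cmod w / 2" using u by linarith
  then show "u \<noteq> 0" using w by auto
  then show "exp (z + Ln (u / w)) = u" using w by (simp add: exp_add w_def)
  have inb: "v / w \<in> cball 1 (1/2)" if "cmod (v - w) \<le> cmod w / 2" for v
  proof -
    have "1 - v / w = (w - v) / w" using w by (simp add: field_simps)
    then have "dist 1 (v / w) = cmod (w - v) / cmod w" by (simp add: dist_norm norm_divide)
    then have "dist 1 (v / w) = cmod (v - w) / cmod w" using norm_minus_commute[of w v] by simp
    moreover have "cmod (v - w) / cmod w \<le> (cmod w / 2) / cmod w"
      by (rule divide_right_mono) (use that in auto)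
    ultimately show ?thesis using w by simp
  qed
  have "cmod (Ln (u / w) - Ln 1) \<le> 2 * cmod (u / w - 1)" by (rule Ln_lip[OF inb[OF u]]) simp
  moreover have "u / w - 1 = (u - w) / w" using w by (simp add: field_simps)
  ultimately show "cmod (Ln (u / w)) \<le> 2 * cmod (u - w) / cmod w" by (simp add: norm_divide)
  have "cmod (Ln (u / w) - Ln (u' / w)) \<le> 2 * cmod (u / w - u' / w)" by (rule Ln_lip[OF inb[OF u] inb[OF u']])
  moreover have "u / w - u' / w = (u - u') / w" by (simp add: diff_divide_distrib)
  ultimately show "cmod ((z + Ln (u / w)) - (z + Ln (u' / w))) \<le> 2 / cmod w * cmod (u - u')"
    by (simp add: norm_divide)
qed

lemma chain:
  fixes c :: "nat \<Rightarrow> complex" and \<rho> :: "nat \<Rightarrow> real" and n :: nat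
  assumes n: "n \<ge> 1" and cn: "c n = c 0" and \<rho>n: "\<rho> n = \<rho> 0" and \<rho>pos: "\<And>i. \<rho> i > 0"
    and step: "\<And>i. i < n \<Longrightarrow> cmod (c (Suc i) - exp (c i)) + \<rho> (Suc i) \<le> cmod (exp (c i)) * min 1 (\<rho> i) / 2"
    and prod: "(\<Prod>i<n. 2 / cmod (exp (c i))) < 1"
  shows "\<exists>p\<in>cball (c 0) (\<rho> 0). repelling_periodic_point exp p"
proof -
  define E where "E i = cmod (exp (c i))" for i
  have Epos: "E i > 0" for i by (simp add: E_def)
  define G where "G i u = c i + Ln (u / exp (c i))" for i u
  define B where "B i = cball (c i) (\<rho> i)" for i
  have near: "cmod (u - exp (c i)) \<le> E i * min 1 (\<rho> i) / 2" if i: "i < n" and u: "u \<in> B (Suc i)" for i u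
  proof -
    have "cmod (u - exp (c i)) \<le> cmod (u - c (Suc i)) + cmod (c (Suc i) - exp (c i))"
      by (rule norm_diff_triangle_le[of u "c (Suc i)"]) simp_all
    moreover have "cmod (u - c (Suc i)) \<le> \<rho> (Suc i)" using u by (simp add: B_def dist_norm norm_minus_commute)
    ultimately show ?thesis using step[OF i] by (simp add: E_def)
  qed
  have near2: "cmod (u - exp (c i)) \<le> cmod (exp (c i)) / 2" if i: "i < n" and u: "u \<in> B (Suc i)" for i u
  proof -
    have "E i * min 1 (\<rho> i) \<le> E i * 1" by (rule mult_left_mono) (use Epos[of i] in auto)
    then show ?thesis using near[OF i u] unfolding E_def by linarith
  qed
  have Gin: "G i u \<in> B i" if i: "i < n" and u: "u \<in> B (Suc i)" for i u
  proof -
    have "cmod (G i u - c i) = cmod (Ln (u / exp (c i)))" by (simp add: G_def)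
    also have "\<dots> \<le> 2 * cmod (u - exp (c i)) / E i" using G_props(3)[OF near2[OF i u] near2[OF i u]] by (simp add: E_def)
    also have "\<dots> \<le> 2 * (E i * min 1 (\<rho> i) / 2) / E i"
      using near[OF i u] Epos[of i] by (intro divide_right_mono mult_left_mono) auto
    also have "\<dots> \<le> \<rho> i" using Epos[of i] by simp
    finally show ?thesis by (simp add: B_def dist_norm norm_minus_commute)
  qed
  have Glip: "dist (G i u) (G i u') \<le> 2 / E i * dist u u'" if i: "i < n" and u: "u \<in> B (Suc i)" and u': "u' \<in> B (Suc i)" for i u u'
    using G_props(4)[OF near2[OF i u] near2[OF i u']] by (simp add: G_def E_def dist_norm)
  have Gexp: "exp (G i u) = u" if i: "i < n" and u: "u \<in> B (Suc i)" for i u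
    using G_props(2)[OF near2[OF i u] near2[OF i u]] by (simp add: G_def)
  have Gnorm: "cmod u \<ge> E i / 2" if i: "i < n" and u: "u \<in> B (Suc i)" for i u
    using G_props(5)[OF near2[OF i u] near2[OF i u]] by (simp add: E_def)
  define h where "h = rec_nat id (\<lambda>k hk. G (n - Suc k) \<circ> hk)"
  have h0: "h 0 = id" by (simp add: h_def)
  have hS: "h (Suc k) = G (n - Suc k) \<circ> h k" for k by (simp add: h_def)
  have hprops: "h k u \<in> B (n - k) \<and> (\<forall>u'\<in>B n. dist (h k u) (h k u') \<le> (\<Prod>i\<in>{n-k..<n}. 2 / E i) * dist u u')
       \<and> (exp ^^ k) (h k u) = u"
    if "k \<le> n" "u \<in> B n" for k u
    using that
  proof (induction k arbitrary: u)
    case 0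
    then show ?case by (simp add: h0)
  next
    case (Suc k)
    define i where "i = n - Suc k"
    have i: "i < n" "Suc i = n - k" using Suc.prems(1) by (auto simp: i_def)
    have IH: "h k u \<in> B (Suc i)" "\<forall>u'\<in>B n. dist (h k u) (h k u') \<le> (\<Prod>j\<in>{Suc i..<n}. 2 / E j) * dist u u'"
       "(exp ^^ k) (h k u) = u"
      using Suc.IH[OF _ Suc.prems(2)] Suc.prems(1) i(2) by auto
    have "h (Suc k) u \<in> B (n - Suc k)" using Gin[OF i(1) IH(1)] by (simp add: hS i_def)
    moreover have "dist (h (Suc k) u) (h (Suc k) u') \<le> (\<Prod>j\<in>{n - Suc k..<n}. 2 / E j) * dist u u'"
      if u': "u' \<in> B n" for u'
    proof -
      have IH': "h k u' \<in> B (Suc i)" "(exp ^^ k) (h k u') = u'"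
        using Suc.IH[OF _ u'] Suc.prems(1) i(2) by auto
      have "dist (h (Suc k) u) (h (Suc k) u') = dist (G i (h k u)) (G i (h k u'))" by (simp add: hS i_def)
      also have "\<dots> \<le> 2 / E i * dist (h k u) (h k u')" by (rule Glip[OF i(1) IH(1) IH'(1)])
      also have "\<dots> \<le> 2 / E i * ((\<Prod>j\<in>{Suc i..<n}. 2 / E j) * dist u u')"
        using IH(2) u' Epos[of i] by (intro mult_left_mono) auto
      also have "\<dots> = (\<Prod>j\<in>{i..<n}. 2 / E j) * dist u u'"
      proof -
        have "{i..<n} = insert i {Suc i..<n}" using i(1) by auto
        then show ?thesis by simp
      qed
      finally show ?thesis by (simp add: i_def)
    qed
    moreover have "(exp ^^ Suc k) (h (Suc k) u) = u"
    proof -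
      have "(exp ^^ Suc k) (h (Suc k) u) = (exp ^^ k) (exp (G i (h k u)))"
        by (simp add: hS i_def funpow_swap1)
      then show ?thesis using Gexp[OF i(1) IH(1)] IH(3) by simp
    qed
    ultimately show ?case by blast
  qed
  have iter: "(exp ^^ j) (h n u) = h (n - j) u" if "j \<le> n" "u \<in> B n" for j u
    using that
  proof (induction j)
    case 0 then show ?case by simp
  next
    case (Suc j)
    define i where "i = j"
    have hn: "h (n - j) = G i \<circ> h (n - Suc j)" using Suc.prems(1) hS[of "n - Suc j"]
      by (simp add: i_def Suc_diff_Suc)
    have i: "i < n" using Suc.prems(1) by (simp add: i_def)
    have mem: "h (n - Suc j) u \<in> B (Suc i)"
      using hprops[of "n - Suc j" u] Suc.prems by (simp add: i_def Suc_diff_Suc)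
    have "(exp ^^ Suc j) (h n u) = exp (h (n - j) u)" using Suc by simp
    also have "\<dots> = h (n - Suc j) u" using Gexp[OF i mem] hn by simp
    finally show ?case .
  qed
  define S where "S = cball (c 0) (\<rho> 0)"
  have BnS: "B n = S" "B 0 = S" by (simp_all add: B_def S_def cn \<rho>n)
  define L where "L = (\<Prod>i<n. 2 / E i)"
  have L0: "0 \<le> L" unfolding L_def by (rule prod_nonneg) (use Epos in \<open>auto intro: less_imp_le\<close>)
  have L: "0 \<le> L" "L < 1" using prod L0 by (auto simp: L_def E_def)
  have "\<exists>!p\<in>S. h n p = p"
  proof (rule Banach_fix)
    show "complete S" unfolding S_def by (simp add: complete_eq_closed)
    show "S \<noteq> {}" using \<rho>pos[of 0] by (simp add: S_def less_imp_le)
    show "h n ` S \<subseteq> S" using hprops[of n] BnS by auto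
    show "dist (h n x) (h n y) \<le> L * dist x y" if "x \<in> S" "y \<in> S" for x y
      using hprops[of n x] that BnS by (auto simp: L_def atLeast0LessThan)
  qed (use L in auto)
  then obtain p where p: "p \<in> S" "h n p = p" by blast
  have pn: "(exp ^^ n) p = p" using hprops[of n p] p BnS by auto
  have orb: "cmod (exp ((exp ^^ i) p)) \<ge> E i / 2" if i: "i < n" for i
  proof -
    have "exp ((exp ^^ i) p) = (exp ^^ Suc i) (h n p)" using p by simp
    also have "\<dots> = h (n - Suc i) p" by (rule iter) (use i p BnS in auto)
    finally have e: "exp ((exp ^^ i) p) = h (n - Suc i) p" .
    have "h (n - Suc i) p \<in> B (Suc i)" using hprops[of "n - Suc i" p] i p BnS by auto
    then show ?thesis using Gnorm[OF i] e by simp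
  qed
  have "(\<Prod>i<n. E i / 2) \<le> (\<Prod>i<n. cmod (exp ((exp ^^ i) p)))"
    by (rule prod_mono) (use orb Epos in \<open>auto intro: less_imp_le\<close>)
  moreover have "(\<Prod>i<n. E i / 2) > 1"
  proof -
    have "(\<Prod>i<n. E i / 2) * L = (\<Prod>i<n. E i / 2 * (2 / E i))" unfolding L_def by (rule prod.distrib[symmetric])
    also have "\<dots> = (\<Prod>i<n. 1)" by (rule prod.cong) (use Epos in \<open>auto simp: less_imp_neq[symmetric]\<close>)
    also have "\<dots> = 1" by simp
    finally have "(\<Prod>i<n. E i / 2) * L = 1" .
    moreover have "(\<Prod>i<n. E i / 2) \<ge> 0" by (rule prod_nonneg) (use Epos in \<open>auto intro: less_imp_le\<close>)
    ultimately show ?thesis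
    proof -
      assume eq: "(\<Prod>i<n. E i / 2) * L = 1" and nn: "(\<Prod>i<n. E i / 2) \<ge> 0"
      show ?thesis
      proof (rule ccontr)
        assume "\<not> ?thesis"
        then have "(\<Prod>i<n. E i / 2) * L \<le> 1 * L" by (intro mult_right_mono) (use L in auto)
        with eq L show False by simp
      qed
    qed
  qed
  moreover have "deriv (exp ^^ n) p = (\<Prod>i<n. exp ((exp ^^ i) p))"
    by (rule DERIV_imp_deriv[OF deriv_iter_exp])
  moreover have "cmod (\<Prod>i<n. exp ((exp ^^ i) p)) = (\<Prod>i<n. cmod (exp ((exp ^^ i) p)))"
    by (rule prod_norm[symmetric])
  ultimately have "cmod (deriv (exp ^^ n) p) > 1" by (metis order_less_le_trans)
  then have "repelling_periodic_point exp p" using n pn by (auto simp: repelling_periodic_point_def)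
  then show ?thesis using p by (auto simp: S_def)
qed

theorem mainTheorem15:
  fixes U :: "complex set"
  assumes "open U" and "U \<noteq> {}"
  shows "\<exists>p\<in>U. repelling_periodic_point exp p"
proof -
  obtain u0 where u0: "u0 \<in> U" using assms(2) by blast
  obtain e where e: "e > 0" "ball u0 e \<subseteq> U" using assms(1) u0 open_contains_ball by blast
  obtain c1 where c1: "c1 \<in> U" "c1 \<noteq> 0"
  proof (cases "u0 = 0")
    case True
    have "u0 + of_real (e/2) \<in> ball u0 e" using e by (simp add: dist_norm)
    moreover have "u0 + of_real (e/2) \<noteq> 0" using True e by simp
    ultimately show ?thesis using that e by blast
  next
    case False then show ?thesis using that u0 by blast
  qed
  obtain e1 where e1: "e1 > 0" "ball c1 e1 \<subseteq> U" using assms(1) c1 open_contains_ball by blast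
  define r1 where "r1 = min e1 (cmod c1)"
  have r1: "r1 > 0" using e1 c1 by (simp add: r1_def)
  obtain c m where c: "c \<in> ball c1 r1" and m: "Im ((exp ^^ m) c) = 0" using hits_real[OF r1] by blast
  have cU: "c \<in> U" using c e1 by (auto simp: r1_def)
  have c0: "c \<noteq> 0" using c by (auto simp: r1_def dist_norm)
  obtain r0 where r0: "r0 > 0" "cball c r0 \<subseteq> U" using assms(1) cU open_contains_cball by blast
  define a where "a k = Re ((exp ^^ (m + k)) c)" for k
  have areal: "(exp ^^ (m + k)) c = of_real (a k)" for k
  proof (induction k)
    case 0 then show ?case using m by (simp add: a_def complex_eq_iff)
  next
    case (Suc k)
    have "(exp ^^ (m + Suc k)) c = exp ((exp ^^ (m + k)) c)" by simp
    also have "\<dots> = of_real (exp (a k))" using Suc by (simp add: exp_of_real)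
    finally show ?case by (simp add: a_def)
  qed
  have aS: "a (Suc k) = exp (a k)" for k
  proof -
    have "of_real (a (Suc k)) = (exp ^^ (m + Suc k)) c" by (rule areal[symmetric])
    also have "\<dots> = exp ((exp ^^ (m + k)) c)" by simp
    also have "\<dots> = of_real (exp (a k))" by (simp add: areal exp_of_real)
    finally show ?thesis by simp
  qed
  have ainc: "a (Suc k) \<ge> a k + 1" for k using exp_ge_add_one_self[of "a k"] aS[of k] by linarith
  have alin: "a k \<ge> a 0 + real k" for k
  proof (induction k)
    case 0 then show ?case by simp
  next
    case (Suc k) then show ?case using ainc[of k] by simp
  qed
  have amono: "a k \<le> a k'" if "k \<le> k'" for k k'
    using that
  proof (induction k' )
    case 0 then show ?case by simp
  next
    case (Suc k')
    show ?case
    proof (cases "k = Suc k'")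
      case True then show ?thesis by simp
    next
      case False
      then have "k \<le> k'" using Suc.prems by simp
      then show ?thesis using Suc.IH ainc[of k'] by linarith
    qed
  qed
  define A where "A = cmod (Ln c)"
  have A0: "A \<ge> 0" by (simp add: A_def)
  define T where "T = 12 + 2 * A + 4 * pi"
  define K0 where "K0 = nat \<lceil>T - a 0\<rceil>"
  have aT: "a k \<ge> T" if "k \<ge> K0" for k
  proof -
    have "real K0 \<ge> T - a 0" unfolding K0_def by linarith
    moreover have "a k \<ge> a K0" by (rule amono[OF that])
    ultimately show ?thesis using alin[of K0] by linarith
  qed
  have T12: "T \<ge> 12" using pi_gt_zero by (simp add: T_def A_def)
  define Ei where "Ei j = cmod (exp ((exp ^^ j) c))" for j
  have Eipos: "Ei j > 0" for j by (simp add: Ei_def)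
  define D where "D i = (\<Prod>j<i. Ei j / 2)" for i
  have Dpos: "D i > 0" for i unfolding D_def by (rule prod_pos) (use Eipos in auto)
  have DS: "D (Suc i) = D i * (Ei i / 2)" for i by (simp add: D_def)
  define Ssum where "Ssum = (\<Sum>i\<le>m + K0. D i)"
  have Ssum: "D i \<le> Ssum" if "i \<le> m + K0" for i
    unfolding Ssum_def by (rule member_le_sum) (use that Dpos in \<open>auto intro: less_imp_le\<close>)
  have Sspos: "Ssum \<ge> 0" unfolding Ssum_def by (rule sum_nonneg) (use Dpos in \<open>auto intro: less_imp_le\<close>)
  define \<rho>0 where "\<rho>0 = min 1 (min r0 (cmod c / 2)) / (1 + Ssum)"
  have \<rho>0pos: "\<rho>0 > 0" using r0 c0 Sspos by (simp add: \<rho>0_def)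
  have \<rho>0le: "\<rho>0 \<le> min 1 (min r0 (cmod c / 2))"
  proof -
    have "min 1 (min r0 (cmod c / 2)) / (1 + Ssum) \<le> min 1 (min r0 (cmod c / 2)) / 1"
      by (rule divide_left_mono) (use r0 c0 Sspos in auto)
    then show ?thesis by (simp add: \<rho>0_def)
  qed
  have small: "\<rho>0 * D i < 1" if "i \<le> m + K0" for i
  proof -
    have "\<rho>0 * D i \<le> (1 / (1 + Ssum)) * D i"
    proof (rule mult_right_mono)
      show "\<rho>0 \<le> 1 / (1 + Ssum)" unfolding \<rho>0_def by (rule divide_right_mono) (use Sspos in auto)
    qed (use Dpos in \<open>auto intro: less_imp_le\<close>)
    also have "\<dots> = D i / (1 + Ssum)" by simp
    also have "\<dots> < 1" using Ssum[OF that] Sspos by (simp add: field_simps)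
    finally show ?thesis .
  qed
  have Ereal: "Ei (m + k) = a (Suc k)" for k
    by (simp add: Ei_def areal aS)
  have Ddbl: "D (m + k + 1) \<ge> 2 * D (m + k)" if "k \<ge> K0" for k
  proof -
    have "a (Suc k) \<ge> 4" using aT[of "Suc k"] that T12 by simp
    then have "Ei (m + k) / 2 \<ge> 2" using Ereal[of k] by simp
    then have "D (m + k) * (Ei (m + k) / 2) \<ge> D (m + k) * 2" by (intro mult_left_mono) (use Dpos in \<open>auto intro: less_imp_le\<close>)
    then show ?thesis using DS[of "m + k"] by simp
  qed
  have Dgrow: "D (m + K0 + j) \<ge> 2 ^ j * D (m + K0)" for j
  proof (induction j)
    case 0 then show ?case by simp
  next
    case (Suc j)
    have "D (m + (K0 + j) + 1) \<ge> 2 * D (m + (K0 + j))" by (rule Ddbl) simp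
    with Suc.IH show ?case by (simp add: algebra_simps)
  qed
  have exI: "\<exists>i. 1 \<le> \<rho>0 * D i"
  proof -
    obtain j where j: "1 / (\<rho>0 * D (m + K0)) < 2 ^ j" using real_arch_pow[of 2 "1 / (\<rho>0 * D (m + K0))"] by auto
    have "1 < 2 ^ j * (\<rho>0 * D (m + K0))" using j \<rho>0pos Dpos[of "m + K0"] by (simp add: field_simps)
    also have "\<dots> \<le> \<rho>0 * D (m + K0 + j)" using Dgrow[of j] \<rho>0pos
      by (simp add: mult.left_commute mult_left_mono)
    finally show ?thesis by (intro exI[of _ "m + K0 + j"]) simp
  qed
  define M where "M = (LEAST i. 1 \<le> \<rho>0 * D i)"
  have DM: "1 \<le> \<rho>0 * D M" unfolding M_def by (rule LeastI_ex[OF exI])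
  have Dlt: "\<rho>0 * D i < 1" if "i < M" for i
    using not_less_Least[of i "\<lambda>i. 1 \<le> \<rho>0 * D i"] that by (simp add: M_def)
  have Mbig: "M > m + K0" using small DM by (meson not_le)
  define X where "X = exp (a (M - m))"
  have expcM: "exp ((exp ^^ M) c) = of_real X"
  proof -
    have "(exp ^^ M) c = of_real (a (M - m))" using areal[of "M - m"] Mbig by simp
    then show ?thesis by (simp add: X_def exp_of_real)
  qed
  have XT: "X \<ge> T"
  proof -
    have "a (M - m) \<ge> T" using aT Mbig by simp
    moreover have "X \<ge> 1 + a (M - m)" unfolding X_def by (rule exp_ge_add_one_self)
    ultimately show ?thesis by linarith
  qed
  have Xpos: "X > 0" by (simp add: X_def)
  have EiM: "Ei M = X" using expcM Xpos by (simp add: Ei_def)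
  define Y where "Y = exp X"
  have YX: "Y \<ge> 1 + X" unfolding Y_def by (rule exp_ge_add_one_self)
  define k where "k = \<lceil>Y / (2 * pi)\<rceil>"
  define b where "b = Ln c + (2 * of_int k * of_real pi) * \<i>"
  have expb: "exp b = c"
  proof -
    have "exp ((2 * of_int k * of_real pi) * \<i>) = 1" using exp_integer_2pi[of "of_int k"] by simp
    then show ?thesis using c0 by (simp add: b_def exp_add)
  qed
  have kb: "Y \<le> 2 * pi * k" "2 * pi * k \<le> Y + 2 * pi"
  proof -
    have "Y / (2 * pi) \<le> k" "k < Y / (2 * pi) + 1" unfolding k_def by linarith+
    then show "Y \<le> 2 * pi * k" "2 * pi * k \<le> Y + 2 * pi" using pi_gt_zero by (simp_all add: field_simps)
  qed
  have bdist: "cmod (b - of_real (2 * pi * k) * \<i>) = A" by (simp add: b_def A_def)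
  have Ypos: "Y > 0" by (simp add: Y_def)
  have "2 * pi * real_of_int k > 0" using kb(1) Ypos by linarith
  then have kpos: "real_of_int k > 0" using pi_gt_zero by (simp add: zero_less_mult_iff)
  have nk: "cmod (of_real (2 * pi * k) * \<i>) = 2 * pi * k" using kpos pi_gt_zero
    by (simp add: norm_mult)
  have Ybig: "Y \<ge> 2 * A + 4 * pi" using YX XT by (simp add: T_def)
  have bl: "cmod b \<ge> Y / 2"
  proof -
    have "cmod (of_real (2 * pi * k) * \<i>) \<le> cmod b + cmod (of_real (2 * pi * k) * \<i> - b)" by (rule norm_triangle_sub)
    then have "2 * pi * k \<le> cmod b + A" using bdist nk by (simp add: norm_minus_commute)
    then show ?thesis using kb Ybig pi_gt_zero A0 by linarith
  qed
  have bu: "cmod b \<le> 2 * Y"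
  proof -
    have "cmod b \<le> cmod (of_real (2 * pi * k) * \<i>) + cmod (b - of_real (2 * pi * k) * \<i>)" by (rule norm_triangle_sub)
    then have "cmod b \<le> 2 * pi * k + A" using bdist nk by simp
    then show ?thesis using kb Ybig pi_gt_zero A0 by linarith
  qed
  have b0: "b \<noteq> 0" using bl Ypos by auto
  have b2: "cmod b \<ge> 2" using bl Ybig pi_gt3 A0 by linarith
  have lnb: "\<bar>ln (cmod b) - X\<bar> \<le> ln 2"
  proof -
    have "ln (Y / 2) \<le> ln (cmod b)" by (subst ln_le_cancel_iff) (use bl Ypos in auto)
    moreover have "ln (cmod b) \<le> ln (2 * Y)" by (subst ln_le_cancel_iff) (use bu b0 Ypos in auto)
    moreover have "ln (Y / 2) = X - ln 2" using Ypos by (simp add: Y_def ln_div)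
    moreover have "ln (2 * Y) = X + ln 2" using Ypos by (simp add: Y_def ln_mult)
    ultimately show ?thesis by linarith
  qed
  have Lnb: "cmod (Ln b - of_real X) \<le> ln 2 + pi"
  proof -
    have "cmod (Ln b - of_real X) \<le> \<bar>Re (Ln b - of_real X)\<bar> + \<bar>Im (Ln b - of_real X)\<bar>" by (rule cmod_le)
    moreover have "Re (Ln b - of_real X) = ln (cmod b) - X" using b0 by simp
    moreover have "\<bar>Im (Ln b - of_real X)\<bar> \<le> pi" using mpi_less_Im_Ln[OF b0] Im_Ln_le_pi[OF b0] by simp
    ultimately show ?thesis using lnb by linarith
  qed
  define cs where "cs i = (if i \<le> M then (exp ^^ i) c else if i = Suc M then Ln b
                          else if i = Suc (Suc M) then b else c)" for i
  define \<rho>s where "\<rho>s i = (if i \<le> M then \<rho>0 * D i else if i = M + 3 then \<rho>0 else 1)" for i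
  have "\<exists>p\<in>cball (cs 0) (\<rho>s 0). repelling_periodic_point exp p"
  proof (rule chain[where n = "M + 3"])
    show "cs (M + 3) = cs 0" by (simp add: cs_def)
    show "\<rho>s (M + 3) = \<rho>s 0" by (simp add: \<rho>s_def D_def)
    show "\<rho>s i > 0" for i using \<rho>0pos Dpos by (simp add: \<rho>s_def)
    show "cmod (cs (Suc i) - exp (cs i)) + \<rho>s (Suc i) \<le> cmod (exp (cs i)) * min 1 (\<rho>s i) / 2"
      if i: "i < M + 3" for i
    proof -
      consider "i < M" | "i = M" | "i = Suc M" | "i = Suc (Suc M)" using i by linarith
      then show ?thesis
      proof cases
        case 1
        have "cs (Suc i) = exp (cs i)" using 1 by (simp add: cs_def)
        moreover have "\<rho>s (Suc i) = \<rho>0 * D i * (Ei i / 2)" using 1 by (simp add: \<rho>s_def DS)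
        moreover have "min 1 (\<rho>s i) = \<rho>0 * D i" using 1 Dlt[OF 1] by (simp add: \<rho>s_def)
        moreover have "cmod (exp (cs i)) = Ei i" using 1 by (simp add: cs_def Ei_def)
        ultimately show ?thesis by (simp add: field_simps)
      next
        case 2
        have "cs (Suc i) = Ln b" "exp (cs i) = of_real X" using 2 expcM by (simp_all add: cs_def)
        moreover have "\<rho>s (Suc i) = 1" using 2 by (simp add: \<rho>s_def)
        moreover have "min 1 (\<rho>s i) = 1" using 2 DM by (simp add: \<rho>s_def)
        moreover have "cmod (of_real X :: complex) = X" using XT T12 by simp
        moreover have "ln 2 + pi + 1 \<le> X / 2" using XT ln_2_less_1 pi_gt_zero A0 unfolding T_def by linarith
        ultimately show ?thesis using Lnb by simp
      next
        case 3
        have "cs (Suc i) = b" "exp (cs i) = b" using 3 b0 by (simp_all add: cs_def)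
        moreover have "\<rho>s (Suc i) = 1" "\<rho>s i = 1" using 3 by (simp_all add: \<rho>s_def)
        ultimately show ?thesis using b2 by simp
      next
        case 4
        have "cs (Suc i) = c" "exp (cs i) = c" using 4 expb by (simp_all add: cs_def)
        moreover have "\<rho>s (Suc i) = \<rho>0" "\<rho>s i = 1" using 4 by (simp_all add: \<rho>s_def)
        ultimately show ?thesis using \<rho>0le by simp
      qed
    qed
    show "(\<Prod>i<M + 3. 2 / cmod (exp (cs i))) < 1"
    proof -
      define f where "f i = 2 / cmod (exp (cs i))" for i
      have "(\<Prod>i<M + 3. f i) = (\<Prod>i<M. f i) * f M * f (Suc M) * f (Suc (Suc M))"
      proof -
        have "M + 3 = Suc (Suc (Suc M))" by simp
        then show ?thesis by (simp only: prod.lessThan_Suc)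
      qed
      moreover have "f M = 2 / X" using expcM Xpos by (simp add: f_def cs_def)
      moreover have "f (Suc M) = 2 / cmod b" using b0 by (simp add: f_def cs_def)
      moreover have "f (Suc (Suc M)) = 2 / cmod c" using expb by (simp add: f_def cs_def)
      ultimately have split: "(\<Prod>i<M + 3. 2 / cmod (exp (cs i))) =
          (\<Prod>i<M. 2 / cmod (exp (cs i))) * (2 / X) * (2 / cmod b) * (2 / cmod c)"
        by (simp add: f_def)
      have p1: "(\<Prod>i<M. 2 / cmod (exp (cs i))) = 1 / D M"
      proof -
        have "(\<Prod>i<M. 2 / cmod (exp (cs i))) = (\<Prod>i<M. inverse (Ei i / 2))"
          by (rule prod.cong) (auto simp: cs_def Ei_def)
        also have "\<dots> = inverse (D M)" unfolding D_def using prod_inversef[of "\<lambda>i. Ei i / 2" "{..<M}"]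
          by (simp add: o_def)
        finally show ?thesis by (simp add: divide_inverse)
      qed
      have "1 / D M \<le> \<rho>0" using DM Dpos[of M] by (simp add: field_simps)
      also have "\<rho>0 \<le> cmod c / 2" using \<rho>0le by simp
      finally have q: "1 / D M \<le> cmod c / 2" .
      have "(1 / D M) * (2 / X) * (2 / cmod b) * (2 / cmod c) \<le> (cmod c / 2) * (2 / X) * (2 / cmod b) * (2 / cmod c)"
        using q XT T12 b2 c0 by (intro mult_right_mono) auto
      also have "\<dots> = 4 / (X * cmod b)" using c0 by (simp add: field_simps)
      also have "\<dots> < 1"
      proof -
        have "X * cmod b \<ge> 12 * 2" using XT T12 b2 by (intro mult_mono) auto
        then show ?thesis by (simp add: field_simps)
      qed
      finally show ?thesis using split p1 by simp
    qed
  qed simp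
  then obtain p where p: "p \<in> cball c \<rho>0" "repelling_periodic_point exp p"
    by (auto simp: cs_def \<rho>s_def D_def)
  have "p \<in> U" using p(1) \<rho>0le r0 by (auto simp: subset_iff)
  with p(2) show ?thesis by blast
qed

end
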